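(* Let $A$ be a unital $C^*$-algebra with a strongly continuous action $\sigma$ of $S^1$, let $\mathcal A\subseteq A$ be a norm-dense unital $*$-subalgebra, $B$ a unital $C^*$-algebra, $\beta_i:\mathcal A\to B$ a unital algebra homomorphism, $\beta_{-i}(a):=\beta_i(a^* )^*$, and $L_\beta:\mathcal A\to[0,\infty)$ a slip-norm. Suppose: (a) $P_0(\mathcal A)\subseteq\mathcal A$ and there exist $\zeta_1^R,\dots,\zeta_k^R,\zeta_1^L,\dots,\zeta_m^L\in\mathcal A\cap A_1$ with $\sum_j\zeta_j^R(\zeta_j^R)^*=1=\sum_j(\zeta_j^L)^*\zeta_j^L$; (b) $L_\beta(ab)\le L_\beta(a)\|\beta_i(b)\|+\|\beta_{-i}(a)\|L_\beta(b)$ for all $a,b\in\mathcal A$, and the restriction of $\beta_i$ to $\mathcal A\cap A_0$ extends to a unital $*$-homomorphism $A_0\to B$. Then for every $n\in\mathbb Z$ and every $y\in\mathcal A_n:=\mathcal A\cap A_n$ there is a constant $C_y\ge0$ such that $L_\beta(y^*x)\le C_y\cdot(L_\beta(x)+\|x\|)$ for all $x\in\mathcal A_n$.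
   Context: $A_n:=\{a\in A:\sigma_\lambda(a)=\lambda^na\ \forall\lambda\in S^1\}$, $P_0(a):=\frac1{2\pi}\int_0^{2\pi}\sigma_{e^{it}}(a)dt$. A slip-norm is a seminorm $L$ with $L(1)=0$ and $L(a^* )=L(a)$. *)

theory Defs
  imports "HOL-Analysis.Analysis"
begin

text \<open>HOL has no complex normed algebras as a type class.  A complex unital Banach
algebra is rendered as a real unital Banach algebra together with a central element
j with j*j = -1 (the image of the imaginary unit); complex scalar multiplication is
then c . a = Re c a + Im c (j a), and we require norm (c . a) = |c| norm a.\<close>

definition scC :: "'a::real_normed_algebra_1 \<Rightarrow> complex \<Rightarrow> 'a \<Rightarrow> 'a" where
  "scC j c a = Re c *\<^sub>R a + Im c *\<^sub>R (j * a)"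

definition complex_unital_banach_alg :: "'a::{real_normed_algebra_1,banach} \<Rightarrow> bool" where
  "complex_unital_banach_alg j \<longleftrightarrow>
     j * j = -1 \<and> (\<forall>a. j * a = a * j) \<and>
     (\<forall>c a. norm (scC j c a) = cmod c * norm a)"

definition cstar_algebra :: "'a::{real_normed_algebra_1,banach} \<Rightarrow> ('a \<Rightarrow> 'a) \<Rightarrow> bool" where
  "cstar_algebra j st \<longleftrightarrow>
     complex_unital_banach_alg j \<and>
     (\<forall>a. st (st a) = a) \<and>
     (\<forall>a b. st (a + b) = st a + st b) \<and>
     (\<forall>c a. st (scC j c a) = scC j (cnj c) (st a)) \<and>
     (\<forall>a b. st (a * b) = st b * st a) \<and>
     (\<forall>a. norm (st a * a) = (norm a)\<^sup>2)"

text \<open>Strongly continuous action of the circle S^1 by *-automorphisms.  The map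
sigma is only relevant on the unit circle.\<close>
definition circle_action ::
  "'a::{real_normed_algebra_1,banach} \<Rightarrow> ('a \<Rightarrow> 'a) \<Rightarrow> (complex \<Rightarrow> 'a \<Rightarrow> 'a) \<Rightarrow> bool" where
  "circle_action j st \<sigma> \<longleftrightarrow>
     (\<forall>a. \<sigma> 1 a = a) \<and>
     (\<forall>l m a. cmod l = 1 \<longrightarrow> cmod m = 1 \<longrightarrow> \<sigma> (l * m) a = \<sigma> l (\<sigma> m a)) \<and>
     (\<forall>l. cmod l = 1 \<longrightarrow>
        (\<forall>a b. \<sigma> l (a + b) = \<sigma> l a + \<sigma> l b) \<and>
        (\<forall>c a. \<sigma> l (scC j c a) = scC j c (\<sigma> l a)) \<and>
        (\<forall>a b. \<sigma> l (a * b) = \<sigma> l a * \<sigma> l b) \<and>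
        \<sigma> l 1 = 1 \<and>
        (\<forall>a. \<sigma> l (st a) = st (\<sigma> l a))) \<and>
     (\<forall>a. continuous_on {z. cmod z = 1} (\<lambda>z. \<sigma> z a))"

definition spec_sub :: "'a::real_normed_algebra_1 \<Rightarrow> (complex \<Rightarrow> 'a \<Rightarrow> 'a) \<Rightarrow> int \<Rightarrow> 'a set" where
  "spec_sub j \<sigma> n = {a. \<forall>l. cmod l = 1 \<longrightarrow> \<sigma> l a = scC j (l powi n) a}"

definition P0 :: "(complex \<Rightarrow> 'a::{real_normed_algebra_1,banach} \<Rightarrow> 'a) \<Rightarrow> 'a \<Rightarrow> 'a" where
  "P0 \<sigma> a = (1 / (2 * pi)) *\<^sub>R integral {0..2*pi} (\<lambda>t. \<sigma> (cis t) a)"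

definition dense_unital_star_subalg ::
  "'a::{real_normed_algebra_1,banach} \<Rightarrow> ('a \<Rightarrow> 'a) \<Rightarrow> 'a set \<Rightarrow> bool" where
  "dense_unital_star_subalg j st S \<longleftrightarrow>
     1 \<in> S \<and>
     (\<forall>a\<in>S. \<forall>b\<in>S. a + b \<in> S \<and> a * b \<in> S) \<and>
     (\<forall>c. \<forall>a\<in>S. scC j c a \<in> S) \<and>
     (\<forall>a\<in>S. st a \<in> S) \<and>
     closure S = UNIV"

definition unital_alg_hom_on ::
  "'a::real_normed_algebra_1 \<Rightarrow> 'b::real_normed_algebra_1 \<Rightarrow> 'a set \<Rightarrow> ('a \<Rightarrow> 'b) \<Rightarrow> bool" where
  "unital_alg_hom_on jA jB S f \<longleftrightarrow>
     (\<forall>a\<in>S. \<forall>b\<in>S. f (a + b) = f a + f b \<and> f (a * b) = f a * f b) \<and>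
     (\<forall>c. \<forall>a\<in>S. f (scC jA c a) = scC jB c (f a)) \<and>
     f 1 = 1"

definition unital_star_hom_on ::
  "'a::real_normed_algebra_1 \<Rightarrow> ('a \<Rightarrow> 'a) \<Rightarrow> 'b::real_normed_algebra_1 \<Rightarrow> ('b \<Rightarrow> 'b)
     \<Rightarrow> 'a set \<Rightarrow> ('a \<Rightarrow> 'b) \<Rightarrow> bool" where
  "unital_star_hom_on jA stA jB stB S f \<longleftrightarrow>
     unital_alg_hom_on jA jB S f \<and> (\<forall>a\<in>S. f (stA a) = stB (f a))"

definition slip_norm_on ::
  "'a::real_normed_algebra_1 \<Rightarrow> ('a \<Rightarrow> 'a) \<Rightarrow> 'a set \<Rightarrow> ('a \<Rightarrow> real) \<Rightarrow> bool" where
  "slip_norm_on j st S L \<longleftrightarrow>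
     (\<forall>a\<in>S. L a \<ge> 0) \<and>
     (\<forall>a\<in>S. \<forall>b\<in>S. L (a + b) \<le> L a + L b) \<and>
     (\<forall>c. \<forall>a\<in>S. L (scC j c a) = cmod c * L a) \<and>
     L 1 = 0 \<and>
     (\<forall>a\<in>S. L (st a) = L a)"

end

theory Submission
  imports Defs "HOL-Computational_Algebra.Formal_Power_Series"
begin

lemma scC_real: "scC j (of_real r) a = r *\<^sub>R a" by (simp add: scC_def)
lemma scC_one: "scC j 1 a = a" by (simp add: scC_def)
lemma scC_i: "scC j \<i> a = j * a" by (simp add: scC_def)

lemma scC_mult0:
  fixes j :: "'a::real_normed_algebra_1"
  assumes jj: "j * j = -1" and jc: "\<And>x. j * x = x * j"
  shows "scC j c a * scC j d b = scC j (c*d) (a*b)"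
proof -
  have e1: "a * (j * b) = j * (a * b)" by (metis jc mult.assoc)
  have e2: "(j * a) * (j * b) = - (a * b)"
    by (metis e1 jj mult.assoc mult_minus_left mult_1_left)
  have e3: "(j * a) * b = j * (a * b)" by (simp add: mult.assoc)
  have "scC j c a * scC j d b = (Re c * Re d) *\<^sub>R (a*b) + (Re c * Im d) *\<^sub>R (a*(j*b))
      + ((Im c * Re d) *\<^sub>R ((j*a)*b) + (Im c * Im d) *\<^sub>R ((j*a)*(j*b)))"
    unfolding scC_def
    apply (simp only: distrib_left distrib_right mult_scaleR_left mult_scaleR_right scaleR_scaleR scaleR_add_right)
    by (simp add: ac_simps)
  also have "\<dots> = (Re c * Re d - Im c * Im d) *\<^sub>R (a*b) + (Re c * Im d + Im c * Re d) *\<^sub>R (j*(a*b))"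
    unfolding e1 e2 e3 scaleR_diff_left scaleR_add_left scaleR_minus_right by (simp add: algebra_simps)
  also have "\<dots> = scC j (c*d) (a*b)" unfolding scC_def by simp
  finally show ?thesis .
qed

lemma scC_mult:
  assumes "complex_unital_banach_alg j"
  shows "scC j c a * scC j d b = scC j (c*d) (a*b)"
  proof (rule scC_mult0)
  show "j * j = -1" using assms unfolding complex_unital_banach_alg_def by blast
  show "\<And>x. j * x = x * j" using assms unfolding complex_unital_banach_alg_def by blast
qed

lemma cst_props:
  assumes "cstar_algebra j st"
  shows "st (st a) = a" "st (a + b) = st a + st b" "st (a * b) = st b * st a"
    "norm (st a * a) = (norm a)\<^sup>2" "st (r *\<^sub>R a) = r *\<^sub>R st a"
    "complex_unital_banach_alg j"
  using assms unfolding cstar_algebra_def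
  apply auto
  by (metis complex_cnj_complex_of_real scC_real)

lemma cst_one: assumes "cstar_algebra j st" shows "st 1 = 1"
  by (metis assms cst_props(1,3) mult_1_left mult_1_right)

lemma cst_zero: assumes "cstar_algebra j st" shows "st 0 = 0"
  using cst_props(5)[OF assms, of 0 0] by simp

lemma cst_norm: assumes "cstar_algebra j st" shows "norm (st a) = norm a"
proof -
  have le: "norm x \<le> norm (st x)" for x
  proof (cases "norm x = 0")
    case False
    have "(norm x)^2 \<le> norm (st x) * norm x"
      using cst_props(4)[OF assms, of x] norm_mult_ineq[of "st x" x] by simp
    then show ?thesis using False by (simp add: power2_eq_square)
  qed simp
  show ?thesis using le[of a] le[of "st a"] cst_props(1)[OF assms] by simp
qed

lemma cst_bl: assumes "cstar_algebra j st" shows "bounded_linear st"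
  apply (rule bounded_linear_intro[where K=1])
  using cst_props[OF assms] cst_norm[OF assms] by auto

lemma cst_j: assumes "cstar_algebra j st" shows "st j = - j"
proof -
  have "st (scC j \<i> 1) = scC j (cnj \<i>) (st 1)" using assms unfolding cstar_algebra_def by blast
  then show ?thesis by (simp add: scC_i cst_one[OF assms] scC_def)
qed

lemma norm_one_bound: 
  assumes "cstar_algebra j st" "st u * u = 1" shows "norm u \<le> 1"
proof -
  have "(norm u)^2 = 1" using cst_props(4)[OF assms(1), of u] assms(2) by simp
  then show ?thesis by (auto simp add: power2_eq_1_iff)
qed

definition cf :: "nat \<Rightarrow> real" where "cf k = (-1)^k * ((1/2::real) gchoose k)"

lemma cf_bound: "\<bar>cf k\<bar> \<le> 1"
proof (induction k)
  case 0 then show ?case by (simp add: cf_def)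
next
  case (Suc k)
  have r: "((1/2::real) gchoose Suc k) = ((1/2 - of_nat k)/ of_nat (Suc k)) * ((1/2::real) gchoose k)"
  proof -
    have "(1/2::real) * (1/2 gchoose k) = of_nat k * (1/2 gchoose k) + of_nat (Suc k) * (1/2 gchoose (Suc k))"
      by (rule gbinomial_mult_1)
    then have "of_nat (Suc k) * (1/2 gchoose (Suc k)) = (1/2 - of_nat k) * ((1/2::real) gchoose k)"
      by (simp add: algebra_simps)
    then show ?thesis by (simp add: field_simps del: of_nat_Suc)
  qed
  have q0: "\<bar>1/2 - real k\<bar> \<le> real (Suc k)" by (simp add: abs_if)
  have q: "\<bar>(1/2 - real k)/ real (Suc k)\<bar> \<le> 1"
    unfolding abs_divide using q0 by (simp add: pos_divide_le_eq del: of_nat_Suc)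
  have "\<bar>cf (Suc k)\<bar> = \<bar>(1/2 - real k)/ real (Suc k)\<bar> * \<bar>cf k\<bar>"
    unfolding cf_def r by (simp only: abs_mult power_abs abs_neg_one power_one mult_1_left mult_ac)
  also have "\<dots> \<le> 1 * 1" using q Suc.IH by (intro mult_mono) auto
  finally show ?case by simp
qed

lemma cf_conv: "(\<Sum>i\<le>k. cf i * cf (k-i)) = (if k = 0 then 1 else if k = 1 then -1 else 0)"
proof -
  have "(\<Sum>i\<le>k. cf i * cf (k-i)) = (-1)^k * (\<Sum>i\<in>{0..k}. ((1/2::real) gchoose i) * ((1/2) gchoose (k-i)))"
    unfolding sum_distrib_left cf_def atMost_atLeast0
  proof (rule sum.cong)
    fix i assume "i \<in> {0..k}"
    then have "(-1::real)^k = (-1)^i * (-1)^(k-i)" by (simp add: power_add[symmetric])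
    then show "(- 1::real) ^ i * (1 / 2 gchoose i) * ((- 1) ^ (k - i) * (1 / 2 gchoose (k - i))) =
         (- 1) ^ k * ((1 / 2 gchoose i) * (1 / 2 gchoose (k - i)))" by simp
  qed simp
  also have "\<dots> = (-1)^k * ((1::real) gchoose k)" using gbinomial_Vandermonde[of "1/2::real" "1/2" k] by simp
  also have "((1::real) gchoose k) = of_nat (1 choose k)" by (metis binomial_gbinomial of_nat_1)
  finally have e: "(\<Sum>i\<le>k. cf i * cf (k-i)) = (-1)^k * real (1 choose k)" .
  show ?thesis
  proof (cases "k \<le> 1")
    case True then consider "k = 0" | "k = 1" by linarith
    then show ?thesis using e by cases auto
  next
    case False then show ?thesis using e by (simp add: binomial_eq_0)
  qed
qed

definition sq :: "'a::{real_normed_algebra_1,banach} \<Rightarrow> 'a" where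
  "sq t = (\<Sum>k. cf k *\<^sub>R t^k)"

lemma sq_summable:
  fixes t :: "'a::{real_normed_algebra_1,banach}"
  assumes "norm t \<le> 1/2"
  shows "summable (\<lambda>k. norm (cf k *\<^sub>R t^k))"
proof (rule summable_comparison_test[of _ "\<lambda>k. (1/2::real)^k"])
  show "summable (\<lambda>k. (1/2::real)^k)" by (rule summable_geometric) simp
  show "\<exists>N. \<forall>n\<ge>N. norm (norm (cf n *\<^sub>R t ^ n)) \<le> (1/2) ^ n"
  proof (intro exI allI impI)
    fix n :: nat
    have "norm (cf n *\<^sub>R t ^ n) = \<bar>cf n\<bar> * norm (t^n)" by simp
    also have "\<dots> \<le> 1 * (norm t)^n"
      using cf_bound[of n] norm_power_ineq[of t n] by (intro mult_mono) auto
    also have "\<dots> \<le> (1/2)^n" using assms by (simp add: power_mono)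
    finally show "norm (norm (cf n *\<^sub>R t ^ n)) \<le> (1/2) ^ n" by simp
  qed
qed

lemma sq_sq:
  fixes t :: "'a::{real_normed_algebra_1,banach}"
  assumes "norm t \<le> 1/2"
  shows "sq t * sq t = 1 - t"
proof -
  have "sq t * sq t = (\<Sum>k. \<Sum>i\<le>k. (cf i *\<^sub>R t^i) * (cf (k-i) *\<^sub>R t^(k-i)))"
    unfolding sq_def by (rule Cauchy_product[OF sq_summable[OF assms] sq_summable[OF assms]])
  also have "\<dots> = (\<Sum>k. (if k = 0 then 1 else if k = 1 then -t else 0))"
  proof (rule suminf_cong)
    fix k
    have "(\<Sum>i\<le>k. (cf i *\<^sub>R t^i) * (cf (k-i) *\<^sub>R t^(k-i))) = (\<Sum>i\<le>k. (cf i * cf (k-i)) *\<^sub>R t^k)"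
      by (rule sum.cong) (auto simp: power_add[symmetric])
    also have "\<dots> = (\<Sum>i\<le>k. cf i * cf (k-i)) *\<^sub>R t^k" by (simp add: scaleR_sum_left)
    finally show "(\<Sum>i\<le>k. (cf i *\<^sub>R t^i) * (cf (k-i) *\<^sub>R t^(k-i))) = (if k = 0 then 1 else if k = 1 then -t else 0)"
      by (simp add: cf_conv)
  qed
  also have "\<dots> = (\<Sum>k\<in>{0,1::nat}. (if k = 0 then 1 else if k = 1 then -t else 0))"
    by (subst suminf_finite[of "{0,1}"]) auto
  finally show ?thesis by simp
qed

lemma pow_comm: "x * (t::'a::monoid_mult) = t * x \<Longrightarrow> x * t^k = t^k * x"
proof (induction k)
  case (Suc k)
  assume h: "x * t = t * x"
  have "x * t ^ Suc k = (x * t) * t^k" by (simp add: mult.assoc)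
  also have "\<dots> = t * (x * t^k)" by (simp add: h mult.assoc)
  also have "\<dots> = t^Suc k * x" using Suc h by (simp add: mult.assoc)
  finally show ?case .
qed simp

lemma sq_comm:
  fixes t :: "'a::{real_normed_algebra_1,banach}"
  assumes "norm t \<le> 1/2" "x * t = t * x"
  shows "x * sq t = sq t * x"
proof -
  have s: "summable (\<lambda>k. cf k *\<^sub>R t^k)" by (rule summable_norm_cancel[OF sq_summable[OF assms(1)]])
  have "x * sq t = (\<Sum>k. x * (cf k *\<^sub>R t^k))" unfolding sq_def by (rule suminf_mult[OF s, symmetric])
  also have "\<dots> = (\<Sum>k. (cf k *\<^sub>R t^k) * x)" using pow_comm[OF assms(2)] by simp
  also have "\<dots> = sq t * x" unfolding sq_def by (rule suminf_mult2[OF s, symmetric])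
  finally show ?thesis .
qed

lemma sq_in:
  fixes t :: "'a::{real_normed_algebra_1,banach}"
  assumes "norm t \<le> 1/2" "closed S" "0 \<in> S" "\<And>k. t^k \<in> S" "\<And>a b. a \<in> S \<Longrightarrow> b \<in> S \<Longrightarrow> a + b \<in> S"
    "\<And>r a. a \<in> S \<Longrightarrow> r *\<^sub>R a \<in> S"
  shows "sq t \<in> S"
proof -
  have s: "summable (\<lambda>k. cf k *\<^sub>R t^k)" by (rule summable_norm_cancel[OF sq_summable[OF assms(1)]])
  have ps: "(\<Sum>k<n. cf k *\<^sub>R t^k) \<in> S" for n
  proof (induction n)
    case (Suc n)
    then show ?case by (simp add: assms(4,5,6))
  qed (simp add: assms(3))
  show ?thesis unfolding sq_def
    using closed_sequentially[OF assms(2), of "\<lambda>n. (\<Sum>k<n. cf k *\<^sub>R t^k)"] ps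
      summable_LIMSEQ[OF s] by blast
qed

lemma sq_st:
  fixes t :: "'a::{real_normed_algebra_1,banach}"
  assumes "norm t \<le> 1/2" "cstar_algebra j st" "st t = t"
  shows "st (sq t) = sq t"
proof -
  have s: "summable (\<lambda>k. cf k *\<^sub>R t^k)" by (rule summable_norm_cancel[OF sq_summable[OF assms(1)]])
  have p: "st (t^k) = t^k" for k
  proof (induction k)
    case (Suc k)
    have "st (t ^ Suc k) = st (t^k * t)" by (metis power_Suc power_commutes)
    also have "\<dots> = t * t^k" by (simp only: cst_props(3)[OF assms(2)] assms(3) Suc)
    finally show ?case by simp
  qed (simp add: cst_one[OF assms(2)])
  show ?thesis unfolding sq_def bounded_linear.suminf[OF cst_bl[OF assms(2)] s]
    by (simp add: cst_props(5)[OF assms(2)] p)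
qed

lemma grp4: "(a::'a::ab_group_add) - b + (c - d) = a + c - b - d" by (simp add: algebra_simps)

lemma pow_in:
  assumes "1 \<in> S" "\<forall>a\<in>S. \<forall>b\<in>S. a + b \<in> S \<and> a * b \<in> S" "t \<in> S"
  shows "t ^ k \<in> S"
  using assms by (induction k) auto

lemma star_hom_bounded:
  fixes jA :: "'a::{real_normed_algebra_1,banach}" and jB :: "'b::{real_normed_algebra_1,banach}"
  assumes A: "cstar_algebra jA stA" and B: "cstar_algebra jB stB"
    and S1: "1 \<in> S" and Sadd: "\<forall>a\<in>S. \<forall>b\<in>S. a + b \<in> S \<and> a * b \<in> S"
    and Ssc: "\<forall>c. \<forall>a\<in>S. scC jA c a \<in> S" and Sst: "\<forall>a\<in>S. stA a \<in> S" and Scl: "closed S"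
    and phi: "unital_star_hom_on jA stA jB stB S \<phi>"
    and aS: "a \<in> S"
  shows "norm (\<phi> a) \<le> 2 * norm a"
proof -
  have SR: "r *\<^sub>R x \<in> S" if "x \<in> S" for r x using Ssc that scC_real[of jA r x] by metis
  have S0: "0 \<in> S" using SR[OF S1, of 0] by simp
  have padd: "\<phi> (x + y) = \<phi> x + \<phi> y" and pmult: "\<phi> (x * y) = \<phi> x * \<phi> y"
    if "x \<in> S" "y \<in> S" for x y using phi that unfolding unital_star_hom_on_def unital_alg_hom_on_def by blast+
  have pone: "\<phi> 1 = 1" and pst: "\<phi> (stA x) = stB (\<phi> x)" if "x \<in> S" for x
    using phi that unfolding unital_star_hom_on_def unital_alg_hom_on_def by blast+
  have pR: "\<phi> (r *\<^sub>R x) = r *\<^sub>R \<phi> x" if "x \<in> S" for r x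
  proof -
    have "\<phi> (scC jA (of_real r) x) = scC jB (of_real r) (\<phi> x)"
      using phi that unfolding unital_star_hom_on_def unital_alg_hom_on_def by blast
    then show ?thesis by (simp add: scC_real)
  qed
  have p0: "\<phi> 0 = 0" using pR[OF S1, of 0] by simp
  have jAc: "jA * x = x * jA" for x using cst_props(6)[OF A] unfolding complex_unital_banach_alg_def by blast
  have jAj: "jA * jA = -1" using cst_props(6)[OF A] unfolding complex_unital_banach_alg_def by blast
  have step1: "norm (\<phi> h) \<le> 1" if hS: "h \<in> S" and hst: "stA h = h" and hn: "norm h \<le> 1/2" for h
  proof -
    define t where "t = h * h"
    have tn: "norm t \<le> 1/2"
    proof -
      have "norm t \<le> norm h * norm h" unfolding t_def by (rule norm_mult_ineq)
      also have "\<dots> \<le> (1/2) * (1/2)" using hn by (intro mult_mono) auto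
      finally show ?thesis by simp
    qed
    have tS: "t \<in> S" using Sadd hS unfolding t_def by blast
    define s where "s = sq t"
    have sS: "s \<in> S" unfolding s_def
      by (rule sq_in[OF tn Scl S0 pow_in[OF S1 Sadd tS]]) (use Sadd SR in blast)+
    have tst: "stA t = t" unfolding t_def using cst_props(3)[OF A] hst by simp
    have sst: "stA s = s" unfolding s_def by (rule sq_st[OF tn A tst])
    have hs: "h * s = s * h" unfolding s_def by (rule sq_comm[OF tn]) (simp add: t_def mult.assoc)
    have ss: "s * s = 1 - t" unfolding s_def by (rule sq_sq[OF tn])
    define u where "u = h + jA * s"
    have "scC jA \<i> s \<in> S" using Ssc sS by blast
    then have jsS: "jA * s \<in> S" by (simp only: scC_i)
    have uS: "u \<in> S" unfolding u_def using Sadd hS jsS by blast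
    have stu: "stA u = h - jA * s"
    proof -
      have "stA (jA * s) = s * stA jA" using cst_props(3)[OF A] sst by simp
      also have "\<dots> = - (s * jA)" by (simp only: cst_j[OF A] mult_minus_right)
      also have "\<dots> = - (jA * s)" by (simp only: jAc[of s])
      finally show ?thesis unfolding u_def using cst_props(2)[OF A] hst by simp
    qed
    have c1: "h * (jA * s) = jA * (h * s)"
    proof -
      have "h * (jA * s) = (h * jA) * s" by (simp only: mult.assoc)
      also have "\<dots> = (jA * h) * s" by (simp only: jAc[of h])
      finally show ?thesis by (simp only: mult.assoc)
    qed
    have c2: "(jA * s) * h = jA * (s * h)" by (simp add: mult.assoc)
    have c3: "(jA * s) * (jA * s) = - (s * s)"
    proof -
      have "(jA * s) * (jA * s) = jA * (s * (jA * s))" by (simp only: mult.assoc)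
      also have "s * (jA * s) = jA * (s * s)"
      proof -
        have "s * (jA * s) = (s * jA) * s" by (simp only: mult.assoc)
        also have "\<dots> = (jA * s) * s" by (simp only: jAc[of s])
        finally show ?thesis by (simp only: mult.assoc)
      qed
      also have "jA * (jA * (s * s)) = (jA * jA) * (s * s)" by (simp only: mult.assoc)
      finally show ?thesis using jAj by simp
    qed
    have uu: "stA u * u = 1"
    proof -
      have "stA u * u = h * h + h * (jA * s) - (jA * s) * h - (jA * s) * (jA * s)"
        unfolding stu by (simp only: u_def left_diff_distrib distrib_left grp4)
      also have "\<dots> = t + s * s" unfolding c1 c2 c3 hs t_def by simp
      finally show ?thesis using ss by simp
    qed
    have suS: "stA u \<in> S" using Sst uS by blast
    have "stB (\<phi> u) * \<phi> u = 1" using pmult[OF suS uS] pst[OF uS] uu pone[OF S1] by simp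
    then have nu: "norm (\<phi> u) \<le> 1" by (rule norm_one_bound[OF B])
    have eq: "u + stA u = h + h" unfolding stu by (simp add: u_def)
    have "\<phi> h + \<phi> h = \<phi> (h + h)" using padd[OF hS hS] by simp
    also have "\<dots> = \<phi> (u + stA u)" using eq by simp
    also have "\<dots> = \<phi> u + stB (\<phi> u)" using padd[OF uS suS] pst[OF uS] by simp
    finally have e2: "\<phi> h + \<phi> h = \<phi> u + stB (\<phi> u)" .
    have "2 * norm (\<phi> h) = norm (\<phi> h + \<phi> h)" using norm_scaleR[of 2 "\<phi> h"] by (simp add: scaleR_2)
    also have "\<dots> = norm (\<phi> u + stB (\<phi> u))" using e2 by simp
    also have "\<dots> \<le> norm (\<phi> u) + norm (stB (\<phi> u))" by (rule norm_triangle_ineq)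
    also have "\<dots> \<le> 2" using nu cst_norm[OF B, of "\<phi> u"] by simp
    finally show ?thesis by simp
  qed
  show ?thesis
  proof (cases "a = 0")
    case True then show ?thesis using p0 by simp
  next
    case False
    define n where "n = norm a"
    have npos: "n > 0" using False n_def by simp
    define r where "r = 1 / (2 * n^2)"
    have rpos: "r > 0" using npos r_def by simp
    define h where "h = r *\<^sub>R (stA a * a)"
    have stS: "stA a \<in> S" using Sst aS by blast
    have hS: "h \<in> S" unfolding h_def using SR Sadd stS aS by blast
    have hst: "stA h = h" unfolding h_def using cst_props(1,3,5)[OF A] by simp
    have hn: "norm h = 1/2" unfolding h_def using cst_props(4)[OF A, of a] rpos npos
      by (simp add: r_def n_def)
    have "norm (\<phi> h) = r * (norm (\<phi> a))^2"
      unfolding h_def pR[OF Sadd[rule_format, OF stS aS, THEN conjunct2]] pmult[OF stS aS] pst[OF aS]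
      using cst_props(4)[OF B] rpos by simp
    then have "r * (norm (\<phi> a))^2 \<le> 1" using step1[OF hS hst] hn by simp
    then have "(norm (\<phi> a))^2 \<le> 2 * n^2" using rpos npos by (simp add: r_def field_simps)
    also have "\<dots> \<le> (2 * n)^2" by (simp add: power_mult_distrib)
    finally have "norm (\<phi> a) \<le> 2 * n" by (rule power2_le_imp_le) (use npos in simp)
    then show ?thesis by (simp add: n_def)
  qed
qed

lemma unit_cnj: "cmod (w::complex) = 1 \<Longrightarrow> cnj w = inverse w"
proof -
  assume w: "cmod w = 1"
  have "w * cnj w = 1" using complex_norm_square[of w] w by simp
  then show ?thesis by (metis inverse_unique mult.commute)
qed

lemma spec_mult:
  assumes A: "cstar_algebra j st" and act: "circle_action j st \<sigma>"
    and a: "a \<in> spec_sub j \<sigma> m" and b: "b \<in> spec_sub j \<sigma> n"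
  shows "a * b \<in> spec_sub j \<sigma> (m + n)"
  unfolding spec_sub_def
proof (intro CollectI allI impI)
  fix l :: complex assume l: "cmod l = 1"
  then have l0: "l \<noteq> 0" by auto
  have "\<sigma> l (a * b) = \<sigma> l a * \<sigma> l b" using act l unfolding circle_action_def by blast
  also have "\<dots> = scC j (l powi m) a * scC j (l powi n) b" using a b l unfolding spec_sub_def by simp
  also have "\<dots> = scC j (l powi (m + n)) (a * b)"
    by (simp add: scC_mult[OF cst_props(6)[OF A]] power_int_add l0)
  finally show "\<sigma> l (a * b) = scC j (l powi (m + n)) (a * b)" .
qed

lemma spec_st:
  assumes A: "cstar_algebra j st" and act: "circle_action j st \<sigma>"
    and a: "a \<in> spec_sub j \<sigma> n"
  shows "st a \<in> spec_sub j \<sigma> (- n)"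
  unfolding spec_sub_def
proof (intro CollectI allI impI)
  fix l :: complex assume l: "cmod l = 1"
  have "\<sigma> l (st a) = st (\<sigma> l a)" using act l unfolding circle_action_def by blast
  also have "\<dots> = st (scC j (l powi n) a)" using a l unfolding spec_sub_def by simp
  also have "\<dots> = scC j (cnj (l powi n)) (st a)" using A unfolding cstar_algebra_def by blast
  also have "cnj (l powi n) = l powi (- n)"
    using unit_cnj[of "l powi n"] l by (simp add: norm_power_int power_int_minus)
  finally show "\<sigma> l (st a) = scC j (l powi (- n)) (st a)" .
qed

lemma sigma_bl:
  fixes jA :: "'a::{real_normed_algebra_1,banach}"
  assumes A: "cstar_algebra jA stA" and act: "circle_action jA stA \<sigma>" and l: "cmod l = 1"
  shows "bounded_linear (\<sigma> l)"
proof -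
  have hom: "unital_star_hom_on jA stA jA stA UNIV (\<sigma> l)"
    using act l unfolding circle_action_def unital_star_hom_on_def unital_alg_hom_on_def by blast
  have b: "norm (\<sigma> l x) \<le> 2 * norm x" for x
    by (rule star_hom_bounded[OF A A _ _ _ _ closed_UNIV hom]) auto
  have add: "\<sigma> l (x + y) = \<sigma> l x + \<sigma> l y" for x y using act l unfolding circle_action_def by blast
  have sc: "\<sigma> l (r *\<^sub>R x) = r *\<^sub>R \<sigma> l x" for r x
  proof -
    have "\<sigma> l (scC jA (of_real r) x) = scC jA (of_real r) (\<sigma> l x)" using act l unfolding circle_action_def by blast
    then show ?thesis by (simp add: scC_real)
  qed
  show ?thesis by (rule bounded_linear_intro[where K=2]) (use add sc b in \<open>auto simp: mult.commute\<close>)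
qed

lemma A0_closed:
  fixes jA :: "'a::{real_normed_algebra_1,banach}"
  assumes A: "cstar_algebra jA stA" and act: "circle_action jA stA \<sigma>"
  shows "closed (spec_sub jA \<sigma> 0)"
proof -
  have "spec_sub jA \<sigma> 0 = (\<Inter>l\<in>{l. cmod l = 1}. {a. \<sigma> l a = id a})"
    unfolding spec_sub_def by (auto simp: scC_one)
  also have "closed \<dots>"
  proof (rule closed_INT, intro ballI)
    fix l assume "l \<in> {l::complex. cmod l = 1}"
    then have "bounded_linear (\<sigma> l)" using sigma_bl[OF A act] by simp
    then have "continuous_on UNIV (\<sigma> l)" using bounded_linear.continuous_on[OF _ continuous_on_id] by blast
    then show "closed {a. \<sigma> l a = id a}" by (intro closed_Collect_eq) (auto intro: continuous_on_id)
  qed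
  finally show ?thesis .
qed

lemma A0_props:
  fixes jA :: "'a::{real_normed_algebra_1,banach}"
  assumes A: "cstar_algebra jA stA" and act: "circle_action jA stA \<sigma>"
  shows "1 \<in> spec_sub jA \<sigma> 0"
    "\<forall>a\<in>spec_sub jA \<sigma> 0. \<forall>b\<in>spec_sub jA \<sigma> 0. a + b \<in> spec_sub jA \<sigma> 0 \<and> a * b \<in> spec_sub jA \<sigma> 0"
    "\<forall>c. \<forall>a\<in>spec_sub jA \<sigma> 0. scC jA c a \<in> spec_sub jA \<sigma> 0"
    "\<forall>a\<in>spec_sub jA \<sigma> 0. stA a \<in> spec_sub jA \<sigma> 0"
proof -
  have P: "\<And>l. cmod l = 1 \<Longrightarrow>
        (\<forall>a b. \<sigma> l (a + b) = \<sigma> l a + \<sigma> l b) \<and>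
        (\<forall>c a. \<sigma> l (scC jA c a) = scC jA c (\<sigma> l a)) \<and>
        (\<forall>a b. \<sigma> l (a * b) = \<sigma> l a * \<sigma> l b) \<and>
        \<sigma> l 1 = 1 \<and>
        (\<forall>a. \<sigma> l (stA a) = stA (\<sigma> l a))" using act unfolding circle_action_def by blast
  show "1 \<in> spec_sub jA \<sigma> 0" unfolding spec_sub_def using P by (simp add: scC_one)
  show "\<forall>a\<in>spec_sub jA \<sigma> 0. \<forall>b\<in>spec_sub jA \<sigma> 0. a + b \<in> spec_sub jA \<sigma> 0 \<and> a * b \<in> spec_sub jA \<sigma> 0"
    unfolding spec_sub_def using P by (simp add: scC_one)
  show "\<forall>c. \<forall>a\<in>spec_sub jA \<sigma> 0. scC jA c a \<in> spec_sub jA \<sigma> 0"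
    unfolding spec_sub_def using P by (simp add: scC_one)
  show "\<forall>a\<in>spec_sub jA \<sigma> 0. stA a \<in> spec_sub jA \<sigma> 0"
    unfolding spec_sub_def using P by (simp add: scC_one)
qed

lemma hom_list_bound:
  fixes f :: "'a::real_normed_vector \<Rightarrow> 'b::real_normed_vector"
  assumes Sadd: "\<forall>a\<in>S. \<forall>b\<in>S. a + b \<in> S" and S0: "0 \<in> S"
    and fadd: "\<forall>a\<in>S. \<forall>b\<in>S. f (a + b) = f a + f b" and f0: "f 0 = 0"
    and g: "\<forall>z\<in>set zs. g z \<in> S \<and> norm (f (g z)) \<le> c z"
  shows "sum_list (map g zs) \<in> S \<and> norm (f (sum_list (map g zs))) \<le> sum_list (map c zs)"
  using g
proof (induction zs)
  case Nil then show ?case using S0 f0 by simp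
next
  case (Cons z zs)
  then have IH: "sum_list (map g zs) \<in> S" "norm (f (sum_list (map g zs))) \<le> sum_list (map c zs)"
    and gz: "g z \<in> S" "norm (f (g z)) \<le> c z" by auto
  have "norm (f (g z + sum_list (map g zs))) = norm (f (g z) + f (sum_list (map g zs)))"
    using fadd gz(1) IH(1) by simp
  also have "\<dots> \<le> norm (f (g z)) + norm (f (sum_list (map g zs)))" by (rule norm_triangle_ineq)
  also have "\<dots> \<le> c z + sum_list (map c zs)" using gz(2) IH(2) by simp
  finally show ?case using Sadd gz(1) IH(1) by simp
qed


lemma main_core:
  fixes jA :: "'a::{real_normed_algebra_1,banach}" and stA :: "'a \<Rightarrow> 'a"
    and jB :: "'b::{real_normed_algebra_1,banach}" and stB :: "'b \<Rightarrow> 'b"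
    and \<sigma> :: "complex \<Rightarrow> 'a \<Rightarrow> 'a"
    and \<A> :: "'a set"
    and \<beta> :: "'a \<Rightarrow> 'b"
    and L :: "'a \<Rightarrow> real"
    and zR zL :: "'a list"
  assumes A: "cstar_algebra jA stA"
    and act: "circle_action jA stA \<sigma>"
    and sub: "dense_unital_star_subalg jA stA \<A>"
    and B: "cstar_algebra jB stB"
    and hom: "unital_alg_hom_on jA jB \<A> \<beta>"
    and slip: "slip_norm_on jA stA \<A> L"
    and a2: "set zR \<subseteq> \<A> \<inter> spec_sub jA \<sigma> 1" "set zL \<subseteq> \<A> \<inter> spec_sub jA \<sigma> 1"
    and a3: "sum_list (map (\<lambda>z. z * stA z) zR) = 1"
            "sum_list (map (\<lambda>z. stA z * z) zL) = 1"
    and b1: "\<forall>a\<in>\<A>. \<forall>b\<in>\<A>.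
               L (a * b) \<le> L a * norm (\<beta> b) + norm (stB (\<beta> (stA a))) * L b"
    and b2: "\<exists>\<pi>. unital_star_hom_on jA stA jB stB (spec_sub jA \<sigma> 0) \<pi> \<and>
               (\<forall>a \<in> \<A> \<inter> spec_sub jA \<sigma> 0. \<pi> a = \<beta> a)"
  shows "\<forall>n::int. \<forall>y \<in> \<A> \<inter> spec_sub jA \<sigma> n. \<exists>C\<ge>0.
           \<forall>x \<in> \<A> \<inter> spec_sub jA \<sigma> n. L (stA y * x) \<le> C * (L x + norm x)"
proof -
  have Sadd: "\<forall>a\<in>\<A>. \<forall>b\<in>\<A>. a + b \<in> \<A> \<and> a * b \<in> \<A>" and Sst: "\<forall>a\<in>\<A>. stA a \<in> \<A>"
    and Ssc: "\<forall>c. \<forall>a\<in>\<A>. scC jA c a \<in> \<A>" and S1: "1 \<in> \<A>"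
    using sub unfolding dense_unital_star_subalg_def by blast+
  have S0: "0 \<in> \<A>" using Ssc S1 scC_real[of jA 0 1] by (metis scaleR_zero_left)
  have badd: "\<forall>a\<in>\<A>. \<forall>b\<in>\<A>. \<beta> (a + b) = \<beta> a + \<beta> b" and bmult: "\<forall>a\<in>\<A>. \<forall>b\<in>\<A>. \<beta> (a * b) = \<beta> a * \<beta> b"
    using hom unfolding unital_alg_hom_on_def by blast+
  have b0: "\<beta> 0 = 0" using badd S0 by (metis add_cancel_right_right add_0)
  obtain \<pi> where pi: "unital_star_hom_on jA stA jB stB (spec_sub jA \<sigma> 0) \<pi>"
    and pib: "\<forall>a \<in> \<A> \<inter> spec_sub jA \<sigma> 0. \<pi> a = \<beta> a" using b2 by blast
  note A0 = A0_props[OF A act]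
  have P0: "norm (\<beta> x) \<le> 2 * norm x" if "x \<in> \<A> \<inter> spec_sub jA \<sigma> 0" for x
    using star_hom_bounded[OF A B A0(1) A0(2) A0(3) A0(4) A0_closed[OF A act] pi, of x] pib that by auto
  define P where "P n \<longleftrightarrow> (\<exists>K\<ge>0. \<forall>x \<in> \<A> \<inter> spec_sub jA \<sigma> n. norm (\<beta> x) \<le> K * norm x)" for n
  have Pz: "P 0" unfolding P_def using P0 by (intro exI[of _ 2]) auto
  have step: "P (n + 1)" if "P n" and posR: "\<forall>z\<in>set zs. z \<in> \<A> \<inter> spec_sub jA \<sigma> 1"
    and sR: "sum_list (map (\<lambda>z. z * stA z) zs) = 1" for n zs
  proof -
    obtain K where K0: "K \<ge> 0" and K: "\<forall>x \<in> \<A> \<inter> spec_sub jA \<sigma> n. norm (\<beta> x) \<le> K * norm x"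
      using \<open>P n\<close> unfolding P_def by blast
    define K' where "K' = sum_list (map (\<lambda>z. norm (\<beta> z) * norm (stA z) * K) zs)"
    have K'0: "K' \<ge> 0" unfolding K'_def using K0 by (intro sum_list_nonneg) auto
    have "norm (\<beta> x) \<le> K' * norm x" if x: "x \<in> \<A> \<inter> spec_sub jA \<sigma> (n + 1)" for x
    proof -
      have xe: "x = sum_list (map (\<lambda>z. z * (stA z * x)) zs)"
        using sum_list_mult_const[of "\<lambda>z. z * stA z" x zs] sR by (simp add: mult.assoc)
      have each: "z * (stA z * x) \<in> \<A> \<and> norm (\<beta> (z * (stA z * x))) \<le> (norm (\<beta> z) * norm (stA z) * K) * norm x"
        if zz: "z \<in> set zs" for z
      proof -
        have zA: "z \<in> \<A>" and z1: "z \<in> spec_sub jA \<sigma> 1" using posR zz by auto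
        have szA: "stA z \<in> \<A>" using Sst zA by blast
        have sz1: "stA z \<in> spec_sub jA \<sigma> (-1)" using spec_st[OF A act z1] by simp
        have wA: "stA z * x \<in> \<A>" using Sadd szA x by blast
        have wn: "stA z * x \<in> spec_sub jA \<sigma> n" using spec_mult[OF A act sz1, of x "n+1"] x by simp
        have "norm (\<beta> (z * (stA z * x))) = norm (\<beta> z * \<beta> (stA z * x))" using bmult zA wA by simp
        also have "\<dots> \<le> norm (\<beta> z) * norm (\<beta> (stA z * x))" by (rule norm_mult_ineq)
        also have "\<dots> \<le> norm (\<beta> z) * (K * norm (stA z * x))"
          using K wA wn by (intro mult_left_mono) auto
        also have "\<dots> \<le> norm (\<beta> z) * (K * (norm (stA z) * norm x))"
          using K0 by (intro mult_left_mono norm_mult_ineq) auto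
        finally show ?thesis using Sadd zA wA by (simp add: mult_ac)
      qed
      have "norm (\<beta> x) \<le> sum_list (map (\<lambda>z. (norm (\<beta> z) * norm (stA z) * K) * norm x) zs)"
        using hom_list_bound[of \<A> \<beta> zs "\<lambda>z. z * (stA z * x)" "\<lambda>z. (norm (\<beta> z) * norm (stA z) * K) * norm x"]
          Sadd S0 badd b0 each xe by auto
      also have "\<dots> = K' * norm x" unfolding K'_def by (rule sum_list_mult_const)
      finally show ?thesis .
    qed
    then show ?thesis unfolding P_def using K'0 by blast
  qed
  have stepN: "P (n - 1)" if "P n" and posL: "\<forall>z\<in>set zs. z \<in> \<A> \<inter> spec_sub jA \<sigma> 1"
    and sL: "sum_list (map (\<lambda>z. stA z * z) zs) = 1" for n zs
  proof -
    obtain K where K0: "K \<ge> 0" and K: "\<forall>x \<in> \<A> \<inter> spec_sub jA \<sigma> n. norm (\<beta> x) \<le> K * norm x"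
      using \<open>P n\<close> unfolding P_def by blast
    define K' where "K' = sum_list (map (\<lambda>z. norm (\<beta> (stA z)) * norm z * K) zs)"
    have K'0: "K' \<ge> 0" unfolding K'_def using K0 by (intro sum_list_nonneg) auto
    have "norm (\<beta> x) \<le> K' * norm x" if x: "x \<in> \<A> \<inter> spec_sub jA \<sigma> (n - 1)" for x
    proof -
      have xe: "x = sum_list (map (\<lambda>z. stA z * (z * x)) zs)"
        using sum_list_mult_const[of "\<lambda>z. stA z * z" x zs] sL by (simp add: mult.assoc)
      have each: "stA z * (z * x) \<in> \<A> \<and> norm (\<beta> (stA z * (z * x))) \<le> (norm (\<beta> (stA z)) * norm z * K) * norm x"
        if zz: "z \<in> set zs" for z
      proof -
        have zA: "z \<in> \<A>" and z1: "z \<in> spec_sub jA \<sigma> 1" using posL zz by auto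
        have szA: "stA z \<in> \<A>" using Sst zA by blast
        have wA: "z * x \<in> \<A>" using Sadd zA x by blast
        have wn: "z * x \<in> spec_sub jA \<sigma> n" using spec_mult[OF A act z1, of x "n - 1"] x by simp
        have "norm (\<beta> (stA z * (z * x))) = norm (\<beta> (stA z) * \<beta> (z * x))" using bmult szA wA by simp
        also have "\<dots> \<le> norm (\<beta> (stA z)) * norm (\<beta> (z * x))" by (rule norm_mult_ineq)
        also have "\<dots> \<le> norm (\<beta> (stA z)) * (K * norm (z * x))"
          using K wA wn by (intro mult_left_mono) auto
        also have "\<dots> \<le> norm (\<beta> (stA z)) * (K * (norm z * norm x))"
          using K0 by (intro mult_left_mono norm_mult_ineq) auto
        finally show ?thesis using Sadd szA wA by (simp add: mult_ac)
      qed
      have "norm (\<beta> x) \<le> sum_list (map (\<lambda>z. (norm (\<beta> (stA z)) * norm z * K) * norm x) zs)"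
        using hom_list_bound[of \<A> \<beta> zs "\<lambda>z. stA z * (z * x)" "\<lambda>z. (norm (\<beta> (stA z)) * norm z * K) * norm x"]
          Sadd S0 badd b0 each xe by auto
      also have "\<dots> = K' * norm x" unfolding K'_def by (rule sum_list_mult_const)
      finally show ?thesis .
    qed
    then show ?thesis unfolding P_def using K'0 by blast
  qed
  have Ppos: "P (int k)" for k
  proof (induction k)
    case 0 then show ?case using Pz by simp
  next
    case (Suc k)
    have "P (int k + 1)" by (rule step[OF Suc _ a3(1)]) (use a2(1) in blast)
    then show ?case by (simp add: add.commute)
  qed
  have Pneg: "P (- int k)" for k
  proof (induction k)
    case 0 then show ?case using Pz by simp
  next
    case (Suc k)
    have "P (- int k - 1)" by (rule stepN[OF Suc _ a3(2)]) (use a2(2) in blast)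
    moreover have "- int k - 1 = - int (Suc k)" by simp
    ultimately show ?case by metis
  qed
  have Pall: "P n" for n
  proof (cases "n \<ge> 0")
    case True then show ?thesis using Ppos[of "nat n"] by simp
  next
    case False then show ?thesis using Pneg[of "nat (- n)"] by simp
  qed
  have Lnn: "\<forall>a\<in>\<A>. L a \<ge> 0" and Lst: "\<forall>a\<in>\<A>. L (stA a) = L a"
    using slip unfolding slip_norm_on_def by blast+
  show ?thesis
  proof (intro allI ballI)
    fix n :: int and y assume y: "y \<in> \<A> \<inter> spec_sub jA \<sigma> n"
    obtain K where K0: "K \<ge> 0" and K: "\<forall>x \<in> \<A> \<inter> spec_sub jA \<sigma> n. norm (\<beta> x) \<le> K * norm x"
      using Pall[of n] unfolding P_def by blast
    define M where "M = norm (stB (\<beta> y))"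
    have yA: "y \<in> \<A>" and syA: "stA y \<in> \<A>" using y Sst by auto
    have Ly: "L y \<ge> 0" using Lnn yA by blast
    have M0: "M \<ge> 0" unfolding M_def by simp
    show "\<exists>C\<ge>0. \<forall>x \<in> \<A> \<inter> spec_sub jA \<sigma> n. L (stA y * x) \<le> C * (L x + norm x)"
    proof (intro exI[of _ "L y * K + M"] conjI ballI)
      show "0 \<le> L y * K + M" using Ly K0 M0 by simp
      fix x assume x: "x \<in> \<A> \<inter> spec_sub jA \<sigma> n"
      have xA: "x \<in> \<A>" using x by blast
      have Lx: "L x \<ge> 0" using Lnn xA by blast
      have "L (stA y * x) \<le> L (stA y) * norm (\<beta> x) + norm (stB (\<beta> (stA (stA y)))) * L x"
        using b1 syA xA by blast
      also have "\<dots> = L y * norm (\<beta> x) + M * L x"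
        using Lst yA cst_props(1)[OF A] by (simp add: M_def)
      also have "\<dots> \<le> L y * (K * norm x) + M * L x"
        using K x Ly by (intro add_right_mono mult_left_mono) auto
      also have "\<dots> \<le> (L y * K + M) * (L x + norm x)"
        using Ly K0 M0 Lx by (simp add: algebra_simps)
      finally show "L (stA y * x) \<le> (L y * K + M) * (L x + norm x)" .
    qed
  qed
qed


theorem lemma5p3:
  fixes jA :: "'a::{real_normed_algebra_1,banach}" and stA :: "'a \<Rightarrow> 'a"
    and jB :: "'b::{real_normed_algebra_1,banach}" and stB :: "'b \<Rightarrow> 'b"
    and \<sigma> :: "complex \<Rightarrow> 'a \<Rightarrow> 'a"
    and \<A> :: "'a set"
    and \<beta> :: "'a \<Rightarrow> 'b"
    and L :: "'a \<Rightarrow> real"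
    and zR zL :: "'a list"
  assumes A: "cstar_algebra jA stA"
    and act: "circle_action jA stA \<sigma>"
    and sub: "dense_unital_star_subalg jA stA \<A>"
    and B: "cstar_algebra jB stB"
    and hom: "unital_alg_hom_on jA jB \<A> \<beta>"
    and slip: "slip_norm_on jA stA \<A> L"
    and a1: "P0 \<sigma> ` \<A> \<subseteq> \<A>"
    and a2: "set zR \<subseteq> \<A> \<inter> spec_sub jA \<sigma> 1" "set zL \<subseteq> \<A> \<inter> spec_sub jA \<sigma> 1"
    and a3: "sum_list (map (\<lambda>z. z * stA z) zR) = 1"
            "sum_list (map (\<lambda>z. stA z * z) zL) = 1"
    and b1: "\<forall>a\<in>\<A>. \<forall>b\<in>\<A>.
               L (a * b) \<le> L a * norm (\<beta> b) + norm (stB (\<beta> (stA a))) * L b"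
    and b2: "\<exists>\<pi>. unital_star_hom_on jA stA jB stB (spec_sub jA \<sigma> 0) \<pi> \<and>
               (\<forall>a \<in> \<A> \<inter> spec_sub jA \<sigma> 0. \<pi> a = \<beta> a)"
  shows "\<forall>n::int. \<forall>y \<in> \<A> \<inter> spec_sub jA \<sigma> n. \<exists>C\<ge>0.
           \<forall>x \<in> \<A> \<inter> spec_sub jA \<sigma> n. L (stA y * x) \<le> C * (L x + norm x)"
  using main_core[OF A act sub B hom slip a2(1) a2(2) a3(1) a3(2) b1 b2] .

end
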